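(* Let $n\ge 1$ and let $\mathbf{A},\mathbf{B}\in\mathbb{R}^{n\times n}$ be non-singular diagonalizable matrices such that: (i) $\mathbf{A}^q=a\mathbf{I}$ for some positive integer $q\le n$ and some scalar $a\neq 0$; (ii) $\mathbf{I}-a\mathbf{B}^q$ is nonsingular; (iii) the eigenvalues of $\mathbf{B}$ have pairwise distinct absolute values. Define $$S_{\mathbf{A},\mathbf{B}}=\{\mathbf{M}\in\mathbb{R}^{n\times n}\;:\;\exists\,\mathbf{g},\mathbf{h}\in\mathbb{R}^n \text{ with } \mathbf{M}-\mathbf{A}\mathbf{M}\mathbf{B}=\mathbf{g}\mathbf{h}^T\}.$$ Then for every vector $\mathbf{v}\in\mathbb{R}^n$ there exist a matrix $\mathbf{M}\in S_{\mathbf{A},\mathbf{B}}$ and an index $i\in\{1,\dots,n\}$ such that the $i$-th column of $\mathbf{M}$ equals $\mathbf{v}$.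
   Context: For $\mathbf{A},\mathbf{B}\in\mathbb{R}^{n\times n}$, the Stein displacement of $\mathbf{M}\in\mathbb{R}^{n\times n}$ is $\Delta_{\mathbf{A},\mathbf{B}}(\mathbf{M})=\mathbf{M}-\mathbf{A}\mathbf{M}\mathbf{B}$; $S_{\mathbf{A},\mathbf{B}}$ is the set of matrices whose Stein displacement is of the form $\mathbf{g}\mathbf{h}^T$ (rank at most one). *)

theory Defs
  imports "HOL-Analysis.Analysis"
begin

primrec matpow :: "'a::semiring_1 ^'n^'n \<Rightarrow> nat \<Rightarrow> 'a^'n^'n" where
  "matpow M 0 = mat 1"
| "matpow M (Suc k) = M ** matpow M k"

definition cmat :: "real^'n^'m \<Rightarrow> complex^'n^'m" where
  "cmat M = (\<chi> i j. complex_of_real (M $ i $ j))"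

definition diagonalizable :: "real^'n^'n \<Rightarrow> bool" where
  "diagonalizable M \<longleftrightarrow>
     (\<exists>P D :: complex^'n^'n. invertible P \<and> (\<forall>i j. i \<noteq> j \<longrightarrow> D $ i $ j = 0)
        \<and> cmat M = P ** D ** matrix_inv P)"

definition eigenvalues :: "real^'n^'n \<Rightarrow> complex set" where
  "eigenvalues M = {c. \<exists>x :: complex^'n. x \<noteq> 0 \<and> cmat M *v x = c *s x}"

definition outer :: "real^'n \<Rightarrow> real^'n \<Rightarrow> real^'n^'n" where
  "outer g h = (\<chi> i j. g $ i * h $ j)"

definition stein_disp :: "real^'n^'n \<Rightarrow> real^'n^'n \<Rightarrow> real^'n^'n \<Rightarrow> real^'n^'n" where
  "stein_disp A B M = M - A ** M ** B"

definition S_set :: "real^'n^'n \<Rightarrow> real^'n^'n \<Rightarrow> (real^'n^'n) set" where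
  "S_set A B = {M. \<exists>g h. stein_disp A B M = outer g h}"

end

theory Submission imports Defs begin
lemma outer_mult: "A ** outer x u ** B = outer (A *v x) (u v* B)"
proof -
  have "(A ** outer x u ** B) $ i $ j = (\<Sum>l\<in>UNIV. A$i$l * x$l) * (\<Sum>k\<in>UNIV. u$k * B$k$j)" for i j
    apply (simp add: outer_def matrix_matrix_mult_def sum_product sum_distrib_left sum_distrib_right)
    apply (simp add: mult_ac)
    done
  thus ?thesis by (simp add: outer_def vec_eq_iff matrix_vector_mult_def vector_matrix_mult_def)
qed

lemma real_left_eig:
  fixes B :: "real^'n^'n" and y :: "real^'n" and m :: real
  assumes "y \<noteq> 0" "B *v y = m *s y"
  shows "\<exists>u. u \<noteq> 0 \<and> u v* B = m *s u"
proof -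
  have mm: "mat m *v y = m *s y"
    by (simp add: vec_eq_iff matrix_vector_mult_def mat_def if_distrib[of "\<lambda>z. z * _"] cong: if_cong)
  have "(B - mat m) *v y = 0" using assms(2) mm
    by (simp add: matrix_vector_mult_diff_rdistrib)
  hence "\<not> invertible (B - mat m)" using assms(1)
    by (metis invertible_left_inverse matrix_left_invertible_ker)
  hence "det (B - mat m) = 0" by (simp add: invertible_det_nz)
  hence "det (transpose (B - mat m)) = 0" by simp
  hence "\<not> invertible (transpose (B - mat m))" by (simp add: invertible_det_nz)
  then obtain u where u: "u \<noteq> 0" "transpose (B - mat m) *v u = 0"
    by (metis invertible_left_inverse matrix_left_invertible_ker)
  have "u v* (B - mat m) = 0" using u(2) by simp
  moreover have "u v* mat m = m *s u"
    by (simp add: vec_eq_iff vector_matrix_mult_def mat_def if_distrib[of "\<lambda>z. _ * z"] cong: if_cong)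
  ultimately have "u v* B = m *s u"
    by (simp add: vector_matrix_mult_diff_rdistrib)
  thus ?thesis using u(1) by blast
qed

lemma real_eig:
  fixes B :: "real^'n^'n"
  assumes inj: "inj_on cmod (eigenvalues B)" and c: "c \<in> eigenvalues B"
  shows "\<exists>y m. y \<noteq> 0 \<and> B *v y = m *s y"
proof -
  obtain x where x0: "x \<noteq> 0" and ex: "cmat B *v x = c *s x"
    using c unfolding eigenvalues_def by blast
  have ec: "(\<Sum>j\<in>UNIV. complex_of_real (B$i$j) * x$j) = c * x$i" for i
    using ex by (simp add: vec_eq_iff cmat_def matrix_vector_mult_def)
  define xc where "xc = (\<chi> i. cnj (x$i))"
  have "xc \<noteq> 0" using x0 by (simp add: xc_def vec_eq_iff)
  moreover have "cmat B *v xc = cnj c *s xc"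
  proof -
    have "(\<Sum>j\<in>UNIV. complex_of_real (B$i$j) * cnj (x$j)) = cnj c * cnj (x$i)" for i
      using arg_cong[OF ec[of i], of cnj] by (simp add: cnj_sum)
    thus ?thesis by (simp add: vec_eq_iff cmat_def matrix_vector_mult_def xc_def)
  qed
  ultimately have "cnj c \<in> eigenvalues B" unfolding eigenvalues_def by blast
  hence "cnj c = c" using inj c by (simp add: inj_on_def)
  hence im: "Im c = 0" by (metis cnj.simps(2) neg_equal_zero)
  define yr where "yr = (\<chi> i. Re (x$i))"
  define yi where "yi = (\<chi> i. Im (x$i))"
  have r: "B *v yr = Re c *s yr"
  proof -
    have "(\<Sum>j\<in>UNIV. B$i$j * Re (x$j)) = Re c * Re (x$i)" for i
      using arg_cong[OF ec[of i], of Re] im by (simp add: Re_sum)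
    thus ?thesis by (simp add: vec_eq_iff matrix_vector_mult_def yr_def)
  qed
  have i: "B *v yi = Re c *s yi"
  proof -
    have "(\<Sum>j\<in>UNIV. B$i$j * Im (x$j)) = Re c * Im (x$i)" for i
      using arg_cong[OF ec[of i], of Im] im by (simp add: Im_sum)
    thus ?thesis by (simp add: vec_eq_iff matrix_vector_mult_def yi_def)
  qed
  have "yr \<noteq> 0 \<or> yi \<noteq> 0"
    using x0 by (auto simp: vec_eq_iff yr_def yi_def complex_eq_iff)
  thus ?thesis using r i by blast
qed

theorem theorem1:
  fixes A B :: "real^'n^'n" and q :: nat and a :: real
  assumes "invertible A" and "invertible B"
    and "diagonalizable A" and "diagonalizable B"
    and "0 < q" and "q \<le> CARD('n)" and "a \<noteq> 0" and "matpow A q = mat a"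
    and "invertible (mat 1 - a *\<^sub>R matpow B q)"
    and "card (eigenvalues B) = CARD('n)"
    and "inj_on cmod (eigenvalues B)"
  shows "\<forall>v :: real^'n. \<exists>M \<in> S_set A B. \<exists>i. column i M = v"
proof
  fix v :: "real^'n"
  have "eigenvalues B \<noteq> {}" using assms(10) by auto
  then obtain c where "c \<in> eigenvalues B" by blast
  then obtain y m where "y \<noteq> 0" "B *v y = m *s y" using real_eig[OF assms(11)] by blast
  then obtain u where u: "u \<noteq> 0" "u v* B = m *s u" using real_left_eig by blast
  then obtain i where ui: "u$i \<noteq> 0" by (auto simp: vec_eq_iff)
  define x where "x = (1 / u$i) *s v"
  define M where "M = outer x u"
  have "stein_disp A B M = outer (x - m *s (A *v x)) u"
    unfolding stein_disp_def M_def outer_mult u(2)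
    by (simp add: outer_def vec_eq_iff matrix_vector_mult_def algebra_simps)
  hence "M \<in> S_set A B" unfolding S_set_def by blast
  moreover have "column i M = v"
    using ui by (simp add: column_def M_def outer_def x_def vec_eq_iff)
  ultimately show "\<exists>M \<in> S_set A B. \<exists>i. column i M = v" by blast
qed
end
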